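(* Let $m\ge1$, $n\ge1$ and let $\Sigma_0,\Sigma_1,\dots,\Sigma_n\in\mathbb R^{m\times m}$ be such that the block-Toeplitz matrix $\mathbf T_n$, whose $(i,j)$ block ($i,j=0,\dots,n$) is $\Sigma_{i-j}$ if $i\ge j$ and $\Sigma_{j-i}^\top$ if $i<j$, satisfies $\mathbf T_n=\mathbf T_n^\top>0$. Then there exists $\bar N$ such that for every $N\ge\bar N$ the matrix $\mathbf T_n$ can be extended to an $N\times N$ block ($mN\times mN$) block-circulant, symmetric, positive definite matrix $\boldsymbol\Sigma_N$, i.e. one whose upper-left $(n+1)\times(n+1)$ block corner equals $\mathbf T_n$.
   Context: A matrix made of $N\times N$ blocks of size $m\times m$ is block-circulant if its $(i,j)$ block depends only on $(i-j)\bmod N$. *)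

theory Defs
  imports Complex_Main
begin

text \<open>Square real matrices of size d are represented as functions nat \<Rightarrow> nat \<Rightarrow> real,
  of which only the entries with indices below d are relevant.\<close>

definition sym_mat :: "nat \<Rightarrow> (nat \<Rightarrow> nat \<Rightarrow> real) \<Rightarrow> bool" where
  "sym_mat d A \<longleftrightarrow> (\<forall>i<d. \<forall>j<d. A i j = A j i)"

definition pos_def_mat :: "nat \<Rightarrow> (nat \<Rightarrow> nat \<Rightarrow> real) \<Rightarrow> bool" where
  "pos_def_mat d A \<longleftrightarrow>
     (\<forall>x::nat \<Rightarrow> real. (\<exists>i<d. x i \<noteq> 0) \<longrightarrow> (\<Sum>i<d. \<Sum>j<d. x i * A i j * x j) > 0)"

text \<open>Block-Toeplitz matrix T_n built from blocks Sigma 0, ..., Sigma n (each m x m,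
  Sigma k r c is the (r,c) entry of Sigma_k): block (i,j) is Sigma_(i-j) if i \<ge> j and
  the transpose of Sigma_(j-i) otherwise.\<close>

definition block_toeplitz :: "nat \<Rightarrow> (nat \<Rightarrow> nat \<Rightarrow> nat \<Rightarrow> real) \<Rightarrow> nat \<Rightarrow> nat \<Rightarrow> real" where
  "block_toeplitz m Sig p q =
     (let i = p div m; r = p mod m; j = q div m; c = q mod m in
      if j \<le> i then Sig (i - j) r c else Sig (j - i) c r)"

definition block_circulant :: "nat \<Rightarrow> nat \<Rightarrow> (nat \<Rightarrow> nat \<Rightarrow> real) \<Rightarrow> bool" where
  "block_circulant m N A \<longleftrightarrow>
     (\<forall>i<N. \<forall>j<N. \<forall>i'<N. \<forall>j'<N.
        (int i - int j) mod int N = (int i' - int j') mod int N \<longrightarrow>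
        (\<forall>r<m. \<forall>c<m. A (i*m + r) (j*m + c) = A (i'*m + r) (j'*m + c)))"

end

theory Submission
  imports Defs
begin

definition formS :: "nat set \<Rightarrow> (nat \<Rightarrow> nat \<Rightarrow> real) \<Rightarrow> (nat \<Rightarrow> real) \<Rightarrow> real" where
  "formS S M x = (\<Sum>u\<in>S. \<Sum>v\<in>S. x u * M u v * x v)"
definition pdS :: "nat set \<Rightarrow> (nat \<Rightarrow> nat \<Rightarrow> real) \<Rightarrow> bool" where
  "pdS S M \<longleftrightarrow> (\<forall>x. (\<exists>u\<in>S. x u \<noteq> 0) \<longrightarrow> 0 < formS S M x)"
definition symS :: "nat set \<Rightarrow> (nat \<Rightarrow> nat \<Rightarrow> real) \<Rightarrow> bool" where
  "symS S M \<longleftrightarrow> (\<forall>u\<in>S. \<forall>v\<in>S. M u v = M v u)"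
definition schur :: "(nat \<Rightarrow> nat \<Rightarrow> real) \<Rightarrow> nat \<Rightarrow> nat \<Rightarrow> nat \<Rightarrow> real" where
  "schur M j u v = M u v - M u j * M j v / M j j"

lemma formS_zero: "\<forall>u\<in>S. x u = 0 \<Longrightarrow> formS S M x = 0"
  by (simp add: formS_def)

lemma pdS_psd: "pdS S M \<Longrightarrow> 0 \<le> formS S M x"
  unfolding pdS_def by (metis formS_zero order_le_less)

lemma formS_cong: "(\<And>u v. u \<in> S \<Longrightarrow> v \<in> S \<Longrightarrow> M u v = M' u v) \<Longrightarrow> (\<And>u. u \<in> S \<Longrightarrow> x u = x' u)
  \<Longrightarrow> formS S M x = formS S M' x'"
  unfolding formS_def by (intro sum.cong refl) auto

lemma pdS_cong: "(\<And>u v. u \<in> S \<Longrightarrow> v \<in> S \<Longrightarrow> M u v = M' u v) \<Longrightarrow> pdS S M = pdS S M'"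
  unfolding pdS_def using formS_cong[of S M M'] by metis

lemma symS_cong: "(\<And>u v. u \<in> S \<Longrightarrow> v \<in> S \<Longrightarrow> M u v = M' u v) \<Longrightarrow> symS S M = symS S M'"
  unfolding symS_def by auto

lemma ind_mult1: "(if b then 1 else 0) * (x::real) = (if b then x else 0)" by simp
lemma ind_mult2: "(x::real) * (if b then 1 else 0) = (if b then x else 0)" by simp

lemma pdS_diag:
  assumes fin: "finite S" and a: "pdS S M" "j \<in> S"
  shows "0 < M j j"
proof -
  have "0 < formS S M (\<lambda>u. if u = j then 1 else 0)" using a unfolding pdS_def by force
  also have "formS S M (\<lambda>u. if u = j then 1 else 0) = M j j"
    unfolding formS_def using a(2) fin by (simp add: ind_mult1 ind_mult2)
  finally show ?thesis .
qed

lemma schur_identity: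
  assumes fin: "finite S" and j: "j \<in> S" and sym: "symS S M" and d: "M j j \<noteq> 0"
  shows "formS S M x = M j j * (x j + (\<Sum>u\<in>S-{j}. M j u * x u) / M j j)^2 + formS (S-{j}) (schur M j) x"
proof -
  define S0 where "S0 = S - {j}"
  define b where "b = (\<Sum>u\<in>S0. M j u * x u)"
  have S: "S = insert j S0" "j \<notin> S0" "finite S0" using j fin unfolding S0_def by auto
  have symu: "\<And>u. u \<in> S0 \<Longrightarrow> M u j = M j u" using sym j unfolding symS_def S0_def by blast
  have e1: "formS S M x = x j * M j j * x j + (\<Sum>v\<in>S0. x j * M j v * x v)
      + ((\<Sum>u\<in>S0. x u * M u j * x j) + formS S0 M x)"
  proof -
    have "formS S M x = (\<Sum>v\<in>insert j S0. x j * M j v * x v) + (\<Sum>u\<in>S0. \<Sum>v\<in>insert j S0. x u * M u v * x v)"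
      unfolding formS_def S(1) by (rule sum.insert[OF S(3) S(2)])
    also have "\<dots> = x j * M j j * x j + (\<Sum>v\<in>S0. x j * M j v * x v) + (\<Sum>u\<in>S0. x u * M u j * x j + (\<Sum>v\<in>S0. x u * M u v * x v))"
      by (simp only: sum.insert[OF S(3) S(2)])
    also have "\<dots> = x j * M j j * x j + (\<Sum>v\<in>S0. x j * M j v * x v)
      + ((\<Sum>u\<in>S0. x u * M u j * x j) + formS S0 M x)"
      unfolding formS_def by (simp only: sum.distrib)
    finally show ?thesis .
  qed
  have e2: "(\<Sum>v\<in>S0. x j * M j v * x v) = x j * b" unfolding b_def
    by (simp add: sum_distrib_left mult.assoc)
  have e3: "(\<Sum>u\<in>S0. x u * M u j * x j) = x j * b" unfolding b_def
    by (simp add: sum_distrib_left symu) (simp add: ac_simps)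
  have bb: "(\<Sum>u\<in>S0. \<Sum>v\<in>S0. (x u * M u j) * (M j v * x v)) = b * b"
    unfolding b_def by (simp add: sum_product symu mult.commute cong: sum.cong)
  have e4: "formS S0 (schur M j) x = formS S0 M x - b * b / M j j"
  proof -
    have "formS S0 (schur M j) x = (\<Sum>u\<in>S0. \<Sum>v\<in>S0. x u * M u v * x v - (x u * M u j) * (M j v * x v) / M j j)"
      unfolding formS_def schur_def by (intro sum.cong refl) (simp add: algebra_simps diff_divide_distrib)
    also have "\<dots> = formS S0 M x - (\<Sum>u\<in>S0. \<Sum>v\<in>S0. (x u * M u j) * (M j v * x v)) / M j j"
      unfolding formS_def by (simp add: sum_subtractf sum_divide_distrib)
    finally show ?thesis unfolding bb .
  qed
  show ?thesis unfolding S0_def[symmetric] b_def[symmetric] e1 e2 e3 e4 using d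
    by (simp add: field_simps power2_eq_square)
qed

lemma schur_pd:
  assumes fin: "finite S" and j: "j \<in> S" and sym: "symS S M" and d: "0 < M j j"
  shows "pdS S M \<longleftrightarrow> pdS (S-{j}) (schur M j)"
proof
  assume pd: "pdS S M"
  show "pdS (S-{j}) (schur M j)" unfolding pdS_def
  proof (intro allI impI)
    fix x :: "nat \<Rightarrow> real" assume nz: "\<exists>u\<in>S-{j}. x u \<noteq> 0"
    define x' where "x' = x(j := - (\<Sum>u\<in>S-{j}. M j u * x u) / M j j)"
    have sx: "(\<Sum>u\<in>S-{j}. M j u * x' u) = (\<Sum>u\<in>S-{j}. M j u * x u)"
      unfolding x'_def by (intro sum.cong) auto
    have "\<exists>u\<in>S. x' u \<noteq> 0" using nz unfolding x'_def by auto
    then have "0 < formS S M x'" using pd unfolding pdS_def by blast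
    also have "formS S M x' = formS (S-{j}) (schur M j) x'"
      using schur_identity[OF fin j sym, of x'] d sx by (simp add: x'_def)
    also have "\<dots> = formS (S-{j}) (schur M j) x"
      by (rule formS_cong) (auto simp: x'_def)
    finally show "0 < formS (S - {j}) (schur M j) x" .
  qed
next
  assume pd: "pdS (S-{j}) (schur M j)"
  show "pdS S M" unfolding pdS_def
  proof (intro allI impI)
    fix x :: "nat \<Rightarrow> real" assume nz: "\<exists>u\<in>S. x u \<noteq> 0"
    have id: "formS S M x = M j j * (x j + (\<Sum>u\<in>S-{j}. M j u * x u) / M j j)^2 + formS (S-{j}) (schur M j) x"
      using schur_identity[OF fin j sym] d by simp
    show "0 < formS S M x"
    proof (cases "\<exists>u\<in>S-{j}. x u \<noteq> 0")
      case True
      then have "0 < formS (S-{j}) (schur M j) x" using pd unfolding pdS_def by blast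
      moreover have "0 \<le> M j j * (x j + (\<Sum>u\<in>S-{j}. M j u * x u) / M j j)^2" using d by simp
      ultimately show ?thesis using id by linarith
    next
      case False
      then have xj: "x j \<noteq> 0" using nz by blast
      have z1: "(\<Sum>u\<in>S-{j}. M j u * x u) = 0" using False by simp
      have z2: "formS (S-{j}) (schur M j) x = 0" using False formS_zero by blast
      show ?thesis using id z1 z2 d xj by simp
    qed
  qed
qed

lemma pdS_empty: "pdS {} M" unfolding pdS_def by simp

lemma symS_schur:
  assumes s: "symS S M" and j: "j \<in> S"
  shows "symS (S - {j}) (schur M j)"
  unfolding symS_def
proof (intro ballI)
  fix u v assume u: "u \<in> S - {j}" and v: "v \<in> S - {j}"
  have e: "M u v = M v u" "M u j = M j u" "M j v = M v j" using s u v j unfolding symS_def by auto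
  show "schur M j u v = schur M j v u" unfolding schur_def e by (simp add: mult.commute)
qed

lemma pd_open:
  assumes "finite S"
  shows "(\<forall>t. symS S (A t)) \<Longrightarrow> symS S B \<Longrightarrow> (\<forall>u v. ((\<lambda>t. A t u v) \<longlongrightarrow> B u v) sequentially)
     \<Longrightarrow> pdS S B \<Longrightarrow> eventually (\<lambda>t. pdS S (A t)) sequentially"
  using assms
proof (induction S arbitrary: A B rule: finite_induct)
  case empty
  then show ?case by (simp add: pdS_empty)
next
  case (insert j F)
  have jS: "j \<in> insert j F" by simp
  have F: "insert j F - {j} = F" using insert.hyps by auto
  have fin: "finite (insert j F)" using insert.hyps(1) by simp
  have dB: "0 < B j j" using pdS_diag[OF fin insert.prems(4) jS] .
  have pdF: "pdS F (schur B j)" using schur_pd[OF fin jS insert.prems(2) dB] insert.prems(4) F by simp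
  have symA: "symS F (schur (A t) j)" for t
  proof -
    have s: "symS (insert j F) (A t)" using insert.prems(1) by blast
    show ?thesis using symS_schur[OF s jS] F by simp
  qed
  have symB: "symS F (schur B j)"
    using symS_schur[OF insert.prems(2) jS] F by simp
  have lim: "\<forall>u v. ((\<lambda>t. schur (A t) j u v) \<longlongrightarrow> schur B j u v) sequentially"
  proof (intro allI)
    fix u v
    have l: "((\<lambda>t. A t a b) \<longlongrightarrow> B a b) sequentially" for a b using insert.prems(3) by blast
    show "((\<lambda>t. schur (A t) j u v) \<longlongrightarrow> schur B j u v) sequentially"
      unfolding schur_def using dB by (intro tendsto_intros l) simp
  qed
  have ev1: "eventually (\<lambda>t. pdS F (schur (A t) j)) sequentially"
    by (rule insert.IH) (use symA symB lim pdF insert.hyps(1) in auto)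
  have ev2: "eventually (\<lambda>t. 0 < A t j j) sequentially"
  proof -
    have l: "((\<lambda>t. A t j j) \<longlongrightarrow> B j j) sequentially" using insert.prems(3) by blast
    show ?thesis using order_tendstoD(1)[OF l dB] .
  qed
  show ?case using eventually_conj[OF ev1 ev2]
  proof (rule eventually_mono)
    fix t assume a: "pdS F (schur (A t) j) \<and> 0 < A t j j"
    have s: "symS (insert j F) (A t)" using insert.prems(1) by blast
    show "pdS (insert j F) (A t)"
      using schur_pd[OF fin jS s] a F by simp
  qed
qed

lemma form_union:
  assumes "finite I" "finite K" "I \<inter> K = {}" "\<forall>u\<in>I. \<forall>v\<in>K. M u v = 0 \<and> M v u = 0"
  shows "formS (I \<union> K) M x = formS I M x + formS K M x"
proof -
  have "formS (I \<union> K) M x = (\<Sum>u\<in>I. \<Sum>v\<in>I \<union> K. x u * M u v * x v) + (\<Sum>u\<in>K. \<Sum>v\<in>I \<union> K. x u * M u v * x v)"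
    unfolding formS_def using assms by (simp add: sum.union_disjoint)
  also have "(\<Sum>u\<in>I. \<Sum>v\<in>I \<union> K. x u * M u v * x v) = (\<Sum>u\<in>I. \<Sum>v\<in>I. x u * M u v * x v)"
  proof (rule sum.cong[OF refl])
    fix u assume u: "u \<in> I"
    have "(\<Sum>v\<in>I \<union> K. x u * M u v * x v) = (\<Sum>v\<in>I. x u * M u v * x v) + (\<Sum>v\<in>K. x u * M u v * x v)"
      using assms by (simp add: sum.union_disjoint)
    also have "(\<Sum>v\<in>K. x u * M u v * x v) = 0" using assms(4) u by simp
    finally show "(\<Sum>v\<in>I \<union> K. x u * M u v * x v) = (\<Sum>v\<in>I. x u * M u v * x v)" by simp
  qed
  also have "(\<Sum>u\<in>K. \<Sum>v\<in>I \<union> K. x u * M u v * x v) = (\<Sum>u\<in>K. \<Sum>v\<in>K. x u * M u v * x v)"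
  proof (rule sum.cong[OF refl])
    fix u assume u: "u \<in> K"
    have "(\<Sum>v\<in>I \<union> K. x u * M u v * x v) = (\<Sum>v\<in>I. x u * M u v * x v) + (\<Sum>v\<in>K. x u * M u v * x v)"
      using assms by (simp add: sum.union_disjoint)
    also have "(\<Sum>v\<in>I. x u * M u v * x v) = 0" using assms(4) u by simp
    finally show "(\<Sum>v\<in>I \<union> K. x u * M u v * x v) = (\<Sum>v\<in>K. x u * M u v * x v)" by simp
  qed
  finally show ?thesis unfolding formS_def .
qed

lemma completion:
  assumes "finite J"
  shows "finite I \<Longrightarrow> finite K \<Longrightarrow> I \<inter> J = {} \<Longrightarrow> J \<inter> K = {} \<Longrightarrow> I \<inter> K = {} \<Longrightarrow>
    symS (I \<union> J) M \<Longrightarrow> symS (J \<union> K) M \<Longrightarrow> pdS (I \<union> J) M \<Longrightarrow> pdS (J \<union> K) M \<Longrightarrow>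
    \<exists>M'. symS (I \<union> J \<union> K) M' \<and> pdS (I \<union> J \<union> K) M' \<and>
      (\<forall>u\<in>I \<union> J. \<forall>v\<in>I \<union> J. M' u v = M u v) \<and> (\<forall>u\<in>J \<union> K. \<forall>v\<in>J \<union> K. M' u v = M u v)"
  using assms
proof (induction J arbitrary: M rule: finite_induct)
  case empty
  define M' where "M' u v = (if (u \<in> I \<and> v \<in> K) \<or> (u \<in> K \<and> v \<in> I) then 0 else M u v)" for u v
  have sI: "\<forall>u\<in>I \<union> {}. \<forall>v\<in>I \<union> {}. M u v = M v u" using empty.prems(6) unfolding symS_def .
  have sK: "\<forall>u\<in>{} \<union> K. \<forall>v\<in>{} \<union> K. M u v = M v u" using empty.prems(7) unfolding symS_def .
  have sym: "symS (I \<union> {} \<union> K) M'" unfolding symS_def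
  proof (intro ballI)
    fix u v assume u: "u \<in> I \<union> {} \<union> K" and v: "v \<in> I \<union> {} \<union> K"
    show "M' u v = M' v u"
    proof (cases "(u \<in> I \<and> v \<in> K) \<or> (u \<in> K \<and> v \<in> I)")
      case True then show ?thesis unfolding M'_def by auto
    next
      case False
      then have c: "(u \<in> I \<and> v \<in> I) \<or> (u \<in> K \<and> v \<in> K)" using u v by blast
      have "M u v = M v u" using c sI sK by blast
      moreover have "M' u v = M u v" unfolding M'_def using False by auto
      moreover have "M' v u = M v u" unfolding M'_def using False by auto
      ultimately show ?thesis by simp
    qed
  qed
  have agI: "\<forall>u\<in>I \<union> {}. \<forall>v\<in>I \<union> {}. M' u v = M u v" using empty.prems(5) unfolding M'_def by auto
  have agK: "\<forall>u\<in>{} \<union> K. \<forall>v\<in>{} \<union> K. M' u v = M u v" using empty.prems(5) unfolding M'_def by auto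
  have pd: "pdS (I \<union> {} \<union> K) M'" unfolding pdS_def
  proof (intro allI impI)
    fix x :: "nat \<Rightarrow> real" assume nz: "\<exists>u\<in>I \<union> {} \<union> K. x u \<noteq> 0"
    have f: "formS (I \<union> K) M' x = formS I M' x + formS K M' x"
      by (rule form_union) (use empty.prems in \<open>auto simp: M'_def\<close>)
    have fI: "formS I M' x = formS I M x" by (rule formS_cong) (use agI in auto)
    have fK: "formS K M' x = formS K M x" by (rule formS_cong) (use agK in auto)
    have pI: "pdS I M" and pK: "pdS K M" using empty.prems(8,9) by auto
    show "0 < formS (I \<union> {} \<union> K) M' x"
    proof (cases "\<exists>u\<in>I. x u \<noteq> 0")
      case True
      then have "0 < formS I M x" using pI unfolding pdS_def by blast
      then show ?thesis using f fI fK pdS_psd[OF pK, of x] by simp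
    next
      case False
      then have "\<exists>u\<in>K. x u \<noteq> 0" using nz by auto
      then have "0 < formS K M x" using pK unfolding pdS_def by blast
      then show ?thesis using f fI fK pdS_psd[OF pI, of x] by simp
    qed
  qed
  show ?case using sym pd agI agK by blast
next
  case (insert j J0)
  let ?J = "insert j J0"
  let ?S = "I \<union> ?J \<union> K"
  have jI: "j \<notin> I" and jK: "j \<notin> K" using insert.prems by auto
  have finIJ: "finite (I \<union> ?J)" and finJK: "finite (?J \<union> K)" using insert.prems insert.hyps by auto
  have finS: "finite ?S" using insert.prems insert.hyps by auto
  have jIJ: "j \<in> I \<union> ?J" and jJK: "j \<in> ?J \<union> K" by auto
  have dM: "0 < M j j" using pdS_diag[OF finIJ insert.prems(8) jIJ] .
  have e1: "I \<union> ?J - {j} = I \<union> J0" and e2: "?J \<union> K - {j} = J0 \<union> K"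
    using insert.hyps jI jK by auto
  define M2 where "M2 = schur M j"
  have s1: "symS (I \<union> J0) M2" using symS_schur[OF insert.prems(6) jIJ] e1 M2_def by simp
  have s2: "symS (J0 \<union> K) M2" using symS_schur[OF insert.prems(7) jJK] e2 M2_def by simp
  have p1: "pdS (I \<union> J0) M2" using schur_pd[OF finIJ jIJ insert.prems(6) dM] insert.prems(8) e1 M2_def by simp
  have p2: "pdS (J0 \<union> K) M2" using schur_pd[OF finJK jJK insert.prems(7) dM] insert.prems(9) e2 M2_def by simp
  obtain M3 where M3: "symS (I \<union> J0 \<union> K) M3" "pdS (I \<union> J0 \<union> K) M3"
     "\<forall>u\<in>I \<union> J0. \<forall>v\<in>I \<union> J0. M3 u v = M2 u v" "\<forall>u\<in>J0 \<union> K. \<forall>v\<in>J0 \<union> K. M3 u v = M2 u v"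
    using insert.IH[of M2] insert.prems insert.hyps s1 s2 p1 p2 by auto
  define M' where "M' u v = (if u = j \<or> v = j then M u v else M3 u v + M u j * M j v / M j j)" for u v
  have symj: "M u j = M j u" if "u \<in> ?S" for u
    using that insert.prems(6,7) jIJ jJK unfolding symS_def by blast
  have eS: "?S - {j} = I \<union> J0 \<union> K" using insert.hyps jI jK by auto
  have symM': "symS ?S M'" unfolding symS_def
  proof (intro ballI)
    fix u v assume u: "u \<in> ?S" and v: "v \<in> ?S"
    show "M' u v = M' v u"
    proof (cases "u = j \<or> v = j")
      case True
      have a: "M' u v = M u v" "M' v u = M v u" unfolding M'_def using True by auto
      have "M u v = M v u"
      proof (cases "u = j")
        case True then show ?thesis using symj[OF v] by simp
      next
        case False then have "v = j" using \<open>u = j \<or> v = j\<close> by simp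
        then show ?thesis using symj[OF u] by simp
      qed
      then show ?thesis using a by simp
    next
      case False
      then have "u \<in> I \<union> J0 \<union> K" "v \<in> I \<union> J0 \<union> K" using u v by auto
      then have "M3 u v = M3 v u" using M3(1) unfolding symS_def by blast
      then show ?thesis unfolding M'_def using False symj[OF u] symj[OF v] by (simp add: mult.commute)
    qed
  qed
  have pdM': "pdS ?S M'"
  proof -
    have d': "0 < M' j j" using dM unfolding M'_def by simp
    have "pdS (?S - {j}) (schur M' j)"
      unfolding eS
    proof (rule iffD2[OF pdS_cong M3(2)])
      fix u v assume "u \<in> I \<union> J0 \<union> K" "v \<in> I \<union> J0 \<union> K"
      then have "u \<noteq> j" "v \<noteq> j" using insert.hyps jI jK by auto
      then show "schur M' j u v = M3 u v" unfolding schur_def M'_def by simp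
    qed
    then show ?thesis using schur_pd[OF finS _ symM' d'] by simp
  qed
  have ag1: "\<forall>u\<in>I \<union> ?J. \<forall>v\<in>I \<union> ?J. M' u v = M u v"
  proof (intro ballI)
    fix u v assume u: "u \<in> I \<union> ?J" and v: "v \<in> I \<union> ?J"
    show "M' u v = M u v"
    proof (cases "u = j \<or> v = j")
      case True then show ?thesis unfolding M'_def by auto
    next
      case False
      then have "u \<in> I \<union> J0" "v \<in> I \<union> J0" using u v by auto
      then have "M3 u v = M2 u v" using M3(3) by blast
      then show ?thesis unfolding M'_def M2_def schur_def using False by simp
    qed
  qed
  have ag2: "\<forall>u\<in>?J \<union> K. \<forall>v\<in>?J \<union> K. M' u v = M u v"
  proof (intro ballI)
    fix u v assume u: "u \<in> ?J \<union> K" and v: "v \<in> ?J \<union> K"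
    show "M' u v = M u v"
    proof (cases "u = j \<or> v = j")
      case True then show ?thesis unfolding M'_def by auto
    next
      case False
      then have "u \<in> J0 \<union> K" "v \<in> J0 \<union> K" using u v by auto
      then have "M3 u v = M2 u v" using M3(4) by blast
      then show ?thesis unfolding M'_def M2_def schur_def using False by simp
    qed
  qed
  show ?case using symM' pdM' ag1 ag2 by blast
qed

lemma bt_shift:
  assumes "m \<ge> 1"
  shows "block_toeplitz m R (p + m) (q + m) = block_toeplitz m R p q"
proof -
  have "(p + m) div m = p div m + 1" "(q + m) div m = q div m + 1" "(p + m) mod m = p mod m" "(q + m) mod m = q mod m"
    using assms by auto
  then show ?thesis unfolding block_toeplitz_def Let_def by simp
qed

lemma formS_shift: "formS {m..<m+k} M x = formS {..<k} (\<lambda>p q. M (p+m) (q+m)) (\<lambda>u. x (u+m))"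
proof -
  have e: "\<And>f::nat\<Rightarrow>real. sum f {m..<m+k} = (\<Sum>u<k. f (u+m))"
    using sum.shift_bounds_nat_ivl[of _ 0 m k] by (simp add: atLeast0LessThan add.commute)
  show ?thesis unfolding formS_def e ..
qed

lemma pdS_shift:
  assumes "pdS {..<k} M" "\<forall>p q. M (p+m) (q+m) = M p q"
  shows "pdS {m..<m+k} M"
  unfolding pdS_def
proof (intro allI impI)
  fix x :: "nat \<Rightarrow> real" assume "\<exists>u\<in>{m..<m+k}. x u \<noteq> 0"
  then obtain u where u: "u \<in> {m..<m+k}" "x u \<noteq> 0" by blast
  then have "\<exists>w\<in>{..<k}. x (w + m) \<noteq> 0" by (intro bexI[of _ "u - m"]) auto
  then have "0 < formS {..<k} M (\<lambda>w. x (w+m))" using assms(1)[unfolded pdS_def, rule_format, of "\<lambda>w. x (w+m)"] by blast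
  then show "0 < formS {m..<m+k} M x" unfolding formS_shift using assms(2) by simp
qed

lemma symS_shift:
  assumes "symS {..<k} M" "\<forall>p q. M (p+m) (q+m) = M p q"
  shows "symS {m..<m+k} M"
  unfolding symS_def
proof (intro ballI)
  fix u v assume u: "u \<in> {m..<m+k}" and v: "v \<in> {m..<m+k}"
  have "M (u - m) (v - m) = M (v - m) (u - m)"
    using assms(1) u v unfolding symS_def by auto
  moreover have "M (u - m + m) (v - m + m) = M (u - m) (v - m)" "M (v - m + m) (u - m + m) = M (v - m) (u - m)"
    using assms(2) by blast+
  ultimately show "M u v = M v u" using u v by simp
qed

lemma bt_agree:
  assumes "\<forall>k\<le>L. R' k = R k" "p div m - q div m \<le> L" "q div m - p div m \<le> L"
  shows "block_toeplitz m R' p q = block_toeplitz m R p q"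
  using assms unfolding block_toeplitz_def Let_def by auto

lemma toeplitz_ext:
  assumes m: "m \<ge> 1" and s: "symS {..<m*(L+1)} (block_toeplitz m R)"
    and p: "pdS {..<m*(L+1)} (block_toeplitz m R)"
  shows "\<exists>R'. (\<forall>k\<le>L. R' k = R k) \<and> symS {..<m*(L+2)} (block_toeplitz m R') \<and>
     pdS {..<m*(L+2)} (block_toeplitz m R')"
proof -
  let ?T = "block_toeplitz m R"
  define I where "I = {..<m}"
  define J where "J = {m..<m*(L+1)}"
  define K where "K = {m*(L+1)..<m*(L+2)}"
  have IJ: "I \<union> J = {..<m*(L+1)}" unfolding I_def J_def using m by auto
  have JK: "J \<union> K = {m..<m+m*(L+1)}" unfolding J_def K_def using m by (auto simp: algebra_simps)
  have IJK: "I \<union> J \<union> K = {..<m*(L+2)}" unfolding I_def J_def K_def using m by (auto simp: algebra_simps)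
  have sh: "\<forall>p q. ?T (p+m) (q+m) = ?T p q" using bt_shift[OF m] by blast
  have sJK: "symS (J \<union> K) ?T" unfolding JK by (rule symS_shift[OF s sh])
  have pJK: "pdS (J \<union> K) ?T" unfolding JK by (rule pdS_shift[OF p sh])
  obtain M' where M': "symS (I \<union> J \<union> K) M'" "pdS (I \<union> J \<union> K) M'"
    "\<forall>u\<in>I \<union> J. \<forall>v\<in>I \<union> J. M' u v = ?T u v" "\<forall>u\<in>J \<union> K. \<forall>v\<in>J \<union> K. M' u v = ?T u v"
  proof -
    have fin: "finite J" "finite I" "finite K" unfolding I_def J_def K_def by auto
    have dis: "I \<inter> J = {}" "J \<inter> K = {}" "I \<inter> K = {}" unfolding I_def J_def K_def using m
      by (auto simp: algebra_simps)
    have sIJ: "symS (I \<union> J) ?T" and pIJ: "pdS (I \<union> J) ?T" unfolding IJ using s p by auto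
    show ?thesis using completion[of J I K ?T, OF fin(1) fin(2) fin(3) dis sIJ sJK pIJ pJK] that by blast
  qed
  define R' where "R' k r c = (if k \<le> L then R k r c else M' (m*(L+1) + r) c)" for k r c
  have R'R: "\<forall>k\<le>L. R' k = R k" unfolding R'_def by auto
  have agree: "block_toeplitz m R' p q = M' p q" if pq: "p < m*(L+2)" "q < m*(L+2)" for p q
  proof -
    define i where "i = p div m"
    define j where "j = q div m"
    have "p div m < L + 2" using less_mult_imp_div_less[of p "L+2" m] pq(1) by (simp add: mult.commute)
    then have iL: "i \<le> L + 1" unfolding i_def by simp
    have "q div m < L + 2" using less_mult_imp_div_less[of q "L+2" m] pq(2) by (simp add: mult.commute)
    then have jL: "j \<le> L + 1" unfolding j_def by simp
    show ?thesis
    proof (cases "i \<le> L \<and> j \<le> L")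
      case True
      have "p < m*(L+1)" using True m div_less_iff_less_mult[of m p "L+1"] by (simp add: i_def mult.commute)
      moreover have "q < m*(L+1)" using True m div_less_iff_less_mult[of m q "L+1"] by (simp add: j_def mult.commute)
      ultimately have "M' p q = ?T p q" using M'(3) IJ by auto
      moreover have "block_toeplitz m R' p q = ?T p q"
        by (rule bt_agree[OF R'R]) (use True in \<open>auto simp: i_def j_def\<close>)
      ultimately show ?thesis by simp
    next
      case F1: False
      show ?thesis
      proof (cases "1 \<le> i \<and> 1 \<le> j")
        case True
        have "m \<le> p"
        proof (rule ccontr)
          assume "\<not> m \<le> p" then have "p div m = 0" by simp
          with True show False by (simp add: i_def)
        qed
        moreover have "m \<le> q"
        proof (rule ccontr)
          assume "\<not> m \<le> q" then have "q div m = 0" by simp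
          with True show False by (simp add: j_def)
        qed
        ultimately have "M' p q = ?T p q" using M'(4) JK pq by (auto simp: algebra_simps)
        moreover have "block_toeplitz m R' p q = ?T p q"
          by (rule bt_agree[OF R'R]) (use True iL jL in \<open>auto simp: i_def j_def\<close>)
        ultimately show ?thesis by simp
      next
        case F2: False
        have "(i = L+1 \<and> j = 0) \<or> (i = 0 \<and> j = L+1)" using F1 F2 iL jL by auto
        then show ?thesis
        proof
          assume a: "i = L+1 \<and> j = 0"
          have p': "p = m*(L+1) + p mod m" using a unfolding i_def by (metis div_mult_mod_eq mult.commute)
          have q': "q = q mod m" using a unfolding j_def by (metis div_mult_mod_eq mult_zero_left add_0)
          have "block_toeplitz m R' p q = R' (L+1) (p mod m) (q mod m)"
            using a unfolding block_toeplitz_def Let_def i_def j_def by simp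
          also have "\<dots> = M' p q" unfolding R'_def using p' q' by simp
          finally show ?thesis .
        next
          assume a: "i = 0 \<and> j = L+1"
          have q': "q = m*(L+1) + q mod m" using a unfolding j_def by (metis div_mult_mod_eq mult.commute)
          have p': "p = p mod m" using a unfolding i_def by (metis div_mult_mod_eq mult_zero_left add_0)
          have "block_toeplitz m R' p q = R' (L+1) (q mod m) (p mod m)"
            using a unfolding block_toeplitz_def Let_def i_def j_def by simp
          also have "\<dots> = M' q p" unfolding R'_def using p' q' by simp
          also have "\<dots> = M' p q" using M'(1) pq IJK unfolding symS_def by auto
          finally show ?thesis .
        qed
      qed
    qed
  qed
  have "symS {..<m*(L+2)} (block_toeplitz m R')"
    using M'(1) IJK symS_cong[of "{..<m*(L+2)}" "block_toeplitz m R'" M'] agree by auto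
  moreover have "pdS {..<m*(L+2)} (block_toeplitz m R')"
    using M'(2) IJK pdS_cong[of "{..<m*(L+2)}" "block_toeplitz m R'" M'] agree by auto
  ultimately show ?thesis using R'R by blast
qed

lemma toeplitz_ext_iter:
  assumes m: "m \<ge> 1" and s: "symS {..<m*(n+1)} (block_toeplitz m R)"
    and p: "pdS {..<m*(n+1)} (block_toeplitz m R)"
  shows "\<exists>R'. (\<forall>k\<le>n. R' k = R k) \<and> symS {..<m*(n+1+d)} (block_toeplitz m R') \<and>
     pdS {..<m*(n+1+d)} (block_toeplitz m R')"
proof (induction d)
  case 0
  then show ?case using s p by auto
next
  case (Suc d)
  then obtain R1 where R1: "\<forall>k\<le>n. R1 k = R k" "symS {..<m*(n+d+1)} (block_toeplitz m R1)"
     "pdS {..<m*(n+d+1)} (block_toeplitz m R1)" by (auto simp: add.commute add.left_commute)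
  obtain R2 where R2: "\<forall>k\<le>n+d. R2 k = R1 k" "symS {..<m*(n+d+2)} (block_toeplitz m R2)"
     "pdS {..<m*(n+d+2)} (block_toeplitz m R2)"
    using toeplitz_ext[OF m R1(2) R1(3)] by blast
  have "\<forall>k\<le>n. R2 k = R k" using R1(1) R2(1) by auto
  moreover have "n + 1 + Suc d = n + d + 2" by simp
  ultimately show ?case using R2 by metis
qed

lemma sum_split: fixes g :: "nat \<Rightarrow> real" shows "(\<Sum>a<m*W. g a) = (\<Sum>\<alpha><W. \<Sum>\<rho><m. g (\<alpha>*m + \<rho>))"
proof (induction W)
  case 0
  then show ?case by simp
next
  case (Suc W)
  have "(\<Sum>a<m*Suc W. g a) = (\<Sum>a<m*W + m. g a)" by (simp add: algebra_simps)
  also have "\<dots> = (\<Sum>a<m*W. g a) + (\<Sum>a=m*W..<m*W + m. g a)" using sum.atLeastLessThan_concat[of 0 "m*W" "m*W+m" g] by (simp add: atLeast0LessThan)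
  also have "(\<Sum>a=m*W..<m*W + m. g a) = (\<Sum>\<rho><m. g (W*m + \<rho>))"
    using sum.shift_bounds_nat_ivl[of g 0 "m*W" m] by (simp add: atLeast0LessThan add.commute mult.commute)
  finally show ?case using Suc by simp
qed

lemma digit_eq: "r < m \<Longrightarrow> r' < m \<Longrightarrow> (x*m + r = y*m + (r'::nat)) \<longleftrightarrow> (x = y \<and> r = r')"
proof
  assume r: "r < m" "r' < m" and h: "x*m + r = y*m + r'"
  have "(x*m + r) mod m = (y*m + r') mod m" using h by simp
  then have rr: "r = r'" using r by simp
  then have "x*m = y*m" using h by simp
  then show "x = y \<and> r = r'" using r rr by simp
qed simp

lemma swap23: "(\<Sum>p\<in>P. \<Sum>q\<in>Q. \<Sum>s\<in>S. \<Sum>a\<in>A. \<Sum>b\<in>B. f p q s a b) =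
   (\<Sum>s\<in>S. \<Sum>a\<in>A. \<Sum>b\<in>B. \<Sum>p\<in>P. \<Sum>q\<in>Q. (f p q s a b :: real))"
  apply (simp only: sum.swap[of _ P])
  apply (simp only: sum.swap[of _ Q])
  done

lemma F0: fixes x y z N :: int assumes "0 \<le> x" "x < N" "0 \<le> z" "z < N"
  shows "((x + y) mod N = z) = (x = (z - y) mod N)"
proof
  assume h: "(x + y) mod N = z"
  have "(z - y) mod N = ((x + y) mod N - y) mod N" using h by simp
  also have "\<dots> = x mod N" by (simp add: mod_diff_left_eq)
  also have "\<dots> = x" using assms by simp
  finally show "x = (z - y) mod N" by simp
next
  assume h: "x = (z - y) mod N"
  have "(x + y) mod N = ((z - y) mod N + y) mod N" using h by simp
  also have "\<dots> = z mod N" by (simp add: mod_add_left_eq)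
  also have "\<dots> = z" using assms by simp
  finally show "(x + y) mod N = z" .
qed
lemma F1: assumes "i < N" "s < N" shows "((s + a) mod N = i) = (int s = (int i - int a) mod int N)"
proof -
  have "((s + a) mod N = i) = (int ((s + a) mod N) = int i)" by linarith
  also have "int ((s + a) mod N) = (int s + int a) mod int N" by (simp add: zmod_int)
  finally show ?thesis using F0[of "int s" "int N" "int i" "int a"] assms by simp
qed
lemma F2: assumes "i < N" "j < N" shows "((nat ((int i - int a) mod int N) + b) mod N = j) = ((int a - int b) mod int N = (int i - int j) mod int N)"
proof -
  have N: "0 < int N" using assms by simp
  have e: "int (nat ((int i - int a) mod int N)) = (int i - int a) mod int N" using N by simp
  have "((nat ((int i - int a) mod int N) + b) mod N = j) = (int ((nat ((int i - int a) mod int N) + b) mod N) = int j)" by linarith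
  also have "int ((nat ((int i - int a) mod int N) + b) mod N) = ((int i - int a) mod int N + int b) mod int N"
    by (simp only: zmod_int of_nat_add e)
  also have "\<dots> = (int i - int a + int b) mod int N" by (simp add: mod_add_left_eq)
  also have "((int i - int a + int b) mod int N = int j) = ((int i - int a + int b) mod int N = int j mod int N)" using assms by simp
  also have "\<dots> = (int N dvd (int i - int a + int b) - int j)" by (rule mod_eq_dvd_iff)
  also have "\<dots> = (int N dvd (int a - int b) - (int i - int j))"
  proof -
    have "(int i - int a + int b) - int j = - ((int a - int b) - (int i - int j))" by simp
    then show ?thesis by (simp only: dvd_minus_iff)
  qed
  also have "\<dots> = ((int a - int b) mod int N = (int i - int j) mod int N)" by (rule mod_eq_dvd_iff[symmetric])
  finally show ?thesis .
qed
lemma count: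
  assumes "i < N" "j < N"
  shows "(\<Sum>s<N. if (s + a) mod N = i \<and> (s + b) mod N = j then X else 0) =
    (if (int a - int b) mod int N = (int i - int j) mod int N then X else (0::real))"
proof -
  define s0 where "s0 = nat ((int i - int a) mod int N)"
  have N: "0 < int N" using assms by simp
  have s0N: "s0 < N" unfolding s0_def using N by (simp add: nat_less_iff)
  have c: "((s + a) mod N = i \<and> (s + b) mod N = j) \<longleftrightarrow>
      (s = s0 \<and> (int a - int b) mod int N = (int i - int j) mod int N)" if s: "s < N" for s
  proof -
    have "((s + a) mod N = i) = (int s = (int i - int a) mod int N)" using F1[OF assms(1) s] .
    also have "\<dots> = (s = s0)" unfolding s0_def using N by auto
    finally have e1: "((s + a) mod N = i) = (s = s0)" .
    show ?thesis using e1 F2[OF assms, of a b] unfolding s0_def by auto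
  qed
  have "(\<Sum>s<N. if (s + a) mod N = i \<and> (s + b) mod N = j then X else 0) =
     (\<Sum>s<N. if s = s0 then (if (int a - int b) mod int N = (int i - int j) mod int N then X else 0) else 0)"
    by (rule sum.cong[OF refl]) (use c in auto)
  also have "\<dots> = (if (int a - int b) mod int N = (int i - int j) mod int N then X else 0)"
    using s0N by simp
  finally show ?thesis .
qed

definition phi :: "nat \<Rightarrow> nat \<Rightarrow> nat \<Rightarrow> nat \<Rightarrow> nat" where
  "phi m N s a = ((s + a div m) mod N) * m + a mod m"

definition circW :: "nat \<Rightarrow> nat \<Rightarrow> nat \<Rightarrow> (nat \<Rightarrow> nat \<Rightarrow> real) \<Rightarrow> nat \<Rightarrow> nat \<Rightarrow> real" where
  "circW m N W T p q = (1 / real W) *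
     (\<Sum>s<N. \<Sum>a<m*W. \<Sum>b<m*W. if phi m N s a = p \<and> phi m N s b = q then T a b else 0)"

lemma digit_lt: "k < N \<Longrightarrow> r < m \<Longrightarrow> k*m + r < m*(N::nat)"
proof -
  assume a: "k < N" "r < m"
  have "k*m + r < k*m + m" using a by simp
  also have "\<dots> = Suc k * m" by simp
  also have "\<dots> \<le> N * m" using a by (intro mult_le_mono1) simp
  finally show ?thesis by (simp add: mult.commute)
qed

lemma phi_lt: "m \<ge> 1 \<Longrightarrow> N \<ge> 1 \<Longrightarrow> phi m N s a < m*N"
  unfolding phi_def by (rule digit_lt) auto

lemma phi_split: "\<rho> < m \<Longrightarrow> phi m N s (\<alpha>*m + \<rho>) = ((s + \<alpha>) mod N) * m + \<rho>"
  unfolding phi_def by simp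

lemma circW_form:
  assumes m: "m \<ge> 1" and N: "N \<ge> 1"
  shows "formS {..<m*N} (circW m N W T) x = (1 / real W) * (\<Sum>s<N. formS {..<m*W} T (\<lambda>a. x (phi m N s a)))"
proof -
  let ?I = "\<lambda>p q s a b. if phi m N s a = p \<and> phi m N s b = q then T a b else 0"
  have "formS {..<m*N} (circW m N W T) x =
     (1 / real W) * (\<Sum>p<m*N. \<Sum>q<m*N. \<Sum>s<N. \<Sum>a<m*W. \<Sum>b<m*W. x p * ?I p q s a b * x q)"
    unfolding formS_def circW_def by (simp add: sum_distrib_left sum_distrib_right mult_ac)
  also have "(\<Sum>p<m*N. \<Sum>q<m*N. \<Sum>s<N. \<Sum>a<m*W. \<Sum>b<m*W. x p * ?I p q s a b * x q) =
      (\<Sum>s<N. \<Sum>a<m*W. \<Sum>b<m*W. \<Sum>p<m*N. \<Sum>q<m*N. x p * ?I p q s a b * x q)"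
    by (rule swap23)
  also have "\<dots> = (\<Sum>s<N. \<Sum>a<m*W. \<Sum>b<m*W. x (phi m N s a) * T a b * x (phi m N s b))"
  proof (intro sum.cong refl)
    fix s a b
    have e: "x p * ?I p q s a b * x q = (if p = phi m N s a then (if q = phi m N s b then
         x (phi m N s a) * T a b * x (phi m N s b) else 0) else 0)" for p q
      by auto
    show "(\<Sum>p<m*N. \<Sum>q<m*N. x p * ?I p q s a b * x q) = x (phi m N s a) * T a b * x (phi m N s b)"
    proof -
      have "(\<Sum>q<m*N. (if p = phi m N s a then (if q = phi m N s b then
         x (phi m N s a) * T a b * x (phi m N s b) else 0) else 0)) =
         (if p = phi m N s a then x (phi m N s a) * T a b * x (phi m N s b) else 0)" for p
        using phi_lt[OF m N, of s b] by (cases "p = phi m N s a") simp_all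
      then show ?thesis unfolding e using phi_lt[OF m N, of s a] by simp
    qed
  qed
  finally show ?thesis unfolding formS_def by simp
qed

lemma circW_pd:
  assumes m: "m \<ge> 1" and N: "N \<ge> 1" and W: "W \<ge> 1" and pd: "pdS {..<m*W} T"
  shows "pdS {..<m*N} (circW m N W T)"
  unfolding pdS_def
proof (intro allI impI)
  fix x :: "nat \<Rightarrow> real" assume "\<exists>u\<in>{..<m*N}. x u \<noteq> 0"
  then obtain p0 where p0: "p0 < m*N" "x p0 \<noteq> 0" by auto
  define i0 where "i0 = p0 div m"
  define r0 where "r0 = p0 mod m"
  have i0N: "i0 < N" unfolding i0_def using p0(1) m by (simp add: div_less_iff_less_mult mult.commute)
  have r0m: "r0 < m" unfolding r0_def using m by simp
  have ph: "phi m N i0 r0 = p0" unfolding phi_def i0_def r0_def using i0N i0_def by simp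
  have r0W: "r0 \<in> {..<m*W}" using r0m W by (simp add: less_le_trans[of r0 m "m*W"])
  have pos: "0 < formS {..<m*W} T (\<lambda>a. x (phi m N i0 a))"
    using pd[unfolded pdS_def, rule_format, of "\<lambda>a. x (phi m N i0 a)"] r0W ph p0(2) by auto
  have "0 < (\<Sum>s<N. formS {..<m*W} T (\<lambda>a. x (phi m N s a)))"
    by (rule sum_pos2[of _ i0]) (use i0N pos pdS_psd[OF pd] in auto)
  then show "0 < formS {..<m*N} (circW m N W T) x" unfolding circW_form[OF m N] using W by simp
qed

lemma circW_sym:
  assumes s: "symS {..<m*W} T"
  shows "circW m N W T p q = circW m N W T q p"
proof -
  have "(\<Sum>a<m*W. \<Sum>b<m*W. if phi m N t a = p \<and> phi m N t b = q then T a b else 0) =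
        (\<Sum>a<m*W. \<Sum>b<m*W. if phi m N t a = q \<and> phi m N t b = p then T a b else 0)" for t
  proof -
    have "(\<Sum>a<m*W. \<Sum>b<m*W. if phi m N t a = q \<and> phi m N t b = p then T a b else 0) =
          (\<Sum>b<m*W. \<Sum>a<m*W. if phi m N t a = q \<and> phi m N t b = p then T a b else 0)"
      by (rule sum.swap)
    also have "\<dots> = (\<Sum>b<m*W. \<Sum>a<m*W. if phi m N t b = p \<and> phi m N t a = q then T b a else 0)"
      by (intro sum.cong refl) (use s in \<open>auto simp: symS_def\<close>)
    finally show ?thesis by simp
  qed
  then show ?thesis unfolding circW_def by simp
qed

lemma circW_block:
  assumes m: "m \<ge> 1" and i: "i < N" and j: "j < N" and r: "\<rho> < m" and c: "\<gamma> < m"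
  shows "circW m N W T (i*m+\<rho>) (j*m+\<gamma>) = (1 / real W) *
    (\<Sum>\<alpha><W. \<Sum>\<beta><W. if (int \<alpha> - int \<beta>) mod int N = (int i - int j) mod int N then T (\<alpha>*m+\<rho>) (\<beta>*m+\<gamma>) else 0)"
proof -
  let ?C = "\<lambda>s \<alpha> \<beta>. (s + \<alpha>) mod N = i \<and> (s + \<beta>) mod N = j"
  have inner: "(\<Sum>b<m*W. if phi m N s (\<alpha>*m+\<rho>') = i*m+\<rho> \<and> phi m N s b = j*m+\<gamma> then T (\<alpha>*m+\<rho>') b else 0) =
     (if \<rho>' = \<rho> then (\<Sum>\<beta><W. if ?C s \<alpha> \<beta> then T (\<alpha>*m+\<rho>) (\<beta>*m+\<gamma>) else 0) else 0)"
    if r': "\<rho>' < m" for s \<alpha> \<rho>'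
  proof -
    have e1: "(phi m N s (\<alpha>*m+\<rho>') = i*m+\<rho>) = ((s+\<alpha>) mod N = i \<and> \<rho>' = \<rho>)"
      unfolding phi_split[OF r'] using digit_eq[OF r' r] by simp
    show ?thesis
    proof (cases "\<rho>' = \<rho>")
      case False
      then show ?thesis using e1 by simp
    next
      case True
      have "(\<Sum>b<m*W. if phi m N s (\<alpha>*m+\<rho>') = i*m+\<rho> \<and> phi m N s b = j*m+\<gamma> then T (\<alpha>*m+\<rho>') b else 0)
        = (\<Sum>\<beta><W. \<Sum>\<gamma>'<m. if phi m N s (\<alpha>*m+\<rho>') = i*m+\<rho> \<and> phi m N s (\<beta>*m+\<gamma>') = j*m+\<gamma> then T (\<alpha>*m+\<rho>') (\<beta>*m+\<gamma>') else 0)"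
        by (rule sum_split)
      also have "\<dots> = (\<Sum>\<beta><W. if ?C s \<alpha> \<beta> then T (\<alpha>*m+\<rho>) (\<beta>*m+\<gamma>) else 0)"
      proof (intro sum.cong refl)
        fix \<beta>
        have "(\<Sum>\<gamma>'<m. if phi m N s (\<alpha>*m+\<rho>') = i*m+\<rho> \<and> phi m N s (\<beta>*m+\<gamma>') = j*m+\<gamma> then T (\<alpha>*m+\<rho>') (\<beta>*m+\<gamma>') else 0)
          = (\<Sum>\<gamma>'<m. if \<gamma>' = \<gamma> then (if ?C s \<alpha> \<beta> then T (\<alpha>*m+\<rho>) (\<beta>*m+\<gamma>) else 0) else 0)"
        proof (intro sum.cong refl)
          fix \<gamma>' assume "\<gamma>' \<in> {..<m}"
          then have g': "\<gamma>' < m" by simp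
          have e2: "(phi m N s (\<beta>*m+\<gamma>') = j*m+\<gamma>) = ((s+\<beta>) mod N = j \<and> \<gamma>' = \<gamma>)"
            unfolding phi_split[OF g'] using digit_eq[OF g' c] by simp
          show "(if phi m N s (\<alpha>*m+\<rho>') = i*m+\<rho> \<and> phi m N s (\<beta>*m+\<gamma>') = j*m+\<gamma> then T (\<alpha>*m+\<rho>') (\<beta>*m+\<gamma>') else 0)
            = (if \<gamma>' = \<gamma> then (if ?C s \<alpha> \<beta> then T (\<alpha>*m+\<rho>) (\<beta>*m+\<gamma>) else 0) else 0)"
            using e1 e2 True by auto
        qed
        also have "\<dots> = (if ?C s \<alpha> \<beta> then T (\<alpha>*m+\<rho>) (\<beta>*m+\<gamma>) else 0)" using c by simp
        finally show "(\<Sum>\<gamma>'<m. if phi m N s (\<alpha>*m+\<rho>') = i*m+\<rho> \<and> phi m N s (\<beta>*m+\<gamma>') = j*m+\<gamma> then T (\<alpha>*m+\<rho>') (\<beta>*m+\<gamma>') else 0)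
          = (if ?C s \<alpha> \<beta> then T (\<alpha>*m+\<rho>) (\<beta>*m+\<gamma>) else 0)" .
      qed
      finally show ?thesis using True by simp
    qed
  qed
  have "(\<Sum>s<N. \<Sum>a<m*W. \<Sum>b<m*W. if phi m N s a = i*m+\<rho> \<and> phi m N s b = j*m+\<gamma> then T a b else 0)
     = (\<Sum>s<N. \<Sum>\<alpha><W. \<Sum>\<rho>'<m. \<Sum>b<m*W. if phi m N s (\<alpha>*m+\<rho>') = i*m+\<rho> \<and> phi m N s b = j*m+\<gamma> then T (\<alpha>*m+\<rho>') b else 0)"
    by (rule sum.cong[OF refl], rule sum_split)
  also have "\<dots> = (\<Sum>s<N. \<Sum>\<alpha><W. \<Sum>\<beta><W. if ?C s \<alpha> \<beta> then T (\<alpha>*m+\<rho>) (\<beta>*m+\<gamma>) else 0)"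
  proof (rule sum.cong[OF refl], rule sum.cong[OF refl])
    fix s \<alpha>
    have "(\<Sum>\<rho>'<m. \<Sum>b<m*W. if phi m N s (\<alpha>*m+\<rho>') = i*m+\<rho> \<and> phi m N s b = j*m+\<gamma> then T (\<alpha>*m+\<rho>') b else 0)
      = (\<Sum>\<rho>'<m. if \<rho>' = \<rho> then (\<Sum>\<beta><W. if ?C s \<alpha> \<beta> then T (\<alpha>*m+\<rho>) (\<beta>*m+\<gamma>) else 0) else 0)"
      by (intro sum.cong refl) (simp add: inner)
    also have "\<dots> = (\<Sum>\<beta><W. if ?C s \<alpha> \<beta> then T (\<alpha>*m+\<rho>) (\<beta>*m+\<gamma>) else 0)" using r by simp
    finally show "(\<Sum>\<rho>'<m. \<Sum>b<m*W. if phi m N s (\<alpha>*m+\<rho>') = i*m+\<rho> \<and> phi m N s b = j*m+\<gamma> then T (\<alpha>*m+\<rho>') b else 0)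
      = (\<Sum>\<beta><W. if ?C s \<alpha> \<beta> then T (\<alpha>*m+\<rho>) (\<beta>*m+\<gamma>) else 0)" .
  qed
  also have "\<dots> = (\<Sum>\<alpha><W. \<Sum>s<N. \<Sum>\<beta><W. if ?C s \<alpha> \<beta> then T (\<alpha>*m+\<rho>) (\<beta>*m+\<gamma>) else 0)"
    by (rule sum.swap)
  also have "\<dots> = (\<Sum>\<alpha><W. \<Sum>\<beta><W. \<Sum>s<N. if ?C s \<alpha> \<beta> then T (\<alpha>*m+\<rho>) (\<beta>*m+\<gamma>) else 0)"
    by (rule sum.cong[OF refl], rule sum.swap)
  also have "\<dots> = (\<Sum>\<alpha><W. \<Sum>\<beta><W. if (int \<alpha> - int \<beta>) mod int N = (int i - int j) mod int N then T (\<alpha>*m+\<rho>) (\<beta>*m+\<gamma>) else 0)"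
    by (rule sum.cong[OF refl], rule sum.cong[OF refl], rule count[OF i j])
  finally show ?thesis unfolding circW_def by simp
qed

lemma circW_circulant:
  assumes m: "m \<ge> 1"
  shows "block_circulant m N (circW m N W T)"
  unfolding block_circulant_def
proof (intro allI impI)
  fix i j i' j' r c
  assume h: "i < N" "j < N" "i' < N" "j' < N" "(int i - int j) mod int N = (int i' - int j') mod int N" "r < m" "c < m"
  show "circW m N W T (i * m + r) (j * m + c) = circW m N W T (i' * m + r) (j' * m + c)"
    using circW_block[OF m h(1,2,6,7), of W T] circW_block[OF m h(3,4,6,7), of W T] h(5) by simp
qed

lemma mod_eq_small:
  fixes u v N :: int
  assumes "\<bar>u - v\<bar> < N"
  shows "(u mod N = v mod N) \<longleftrightarrow> u = v"
proof
  assume "u mod N = v mod N"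
  then have d: "N dvd (u - v)" by (simp add: mod_eq_dvd_iff)
  show "u = v"
  proof (rule ccontr)
    assume "u \<noteq> v"
    then have "\<bar>N\<bar> \<le> \<bar>u - v\<bar>" using dvd_imp_le_int[of "u - v" N] d by simp
    then show False using assms by simp
  qed
qed simp

lemma count_pairs_nat:
  assumes "k \<le> W"
  shows "(\<Sum>\<alpha><W. \<Sum>\<beta><W. if \<alpha> = \<beta> + k then (1::real) else 0) = real W - real k"
proof -
  have "(\<Sum>\<alpha><W. \<Sum>\<beta><W. if \<alpha> = \<beta> + k then (1::real) else 0) = (\<Sum>\<beta><W. \<Sum>\<alpha><W. if \<alpha> = \<beta> + k then (1::real) else 0)"
    by (rule sum.swap)
  also have "\<dots> = (\<Sum>\<beta><W. if \<beta> + k < W then 1 else 0)"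
    by (rule sum.cong[OF refl]) (simp add: sum.delta')
  also have "\<dots> = real (card {\<beta>. \<beta> < W \<and> \<beta> + k < W})"
    by (simp add: sum.If_cases Int_def)
  also have "{\<beta>. \<beta> < W \<and> \<beta> + k < W} = {..<W - k}" using assms by auto
  finally show ?thesis using assms by simp
qed

lemma count_pairs:
  assumes "\<bar>d\<bar> < int W"
  shows "(\<Sum>\<alpha><W. \<Sum>\<beta><W. if int \<alpha> - int \<beta> = d then (1::real) else 0) = real W - real_of_int \<bar>d\<bar>"
proof (cases "0 \<le> d")
  case True
  have "(\<Sum>\<alpha><W. \<Sum>\<beta><W. if int \<alpha> - int \<beta> = d then (1::real) else 0) = (\<Sum>\<alpha><W. \<Sum>\<beta><W. if \<alpha> = \<beta> + nat d then (1::real) else 0)"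
    by (intro sum.cong refl) (use True in auto)
  also have "\<dots> = real W - real (nat d)" by (rule count_pairs_nat) (use assms True in auto)
  finally show ?thesis using True by simp
next
  case False
  have "(\<Sum>\<alpha><W. \<Sum>\<beta><W. if int \<alpha> - int \<beta> = d then (1::real) else 0) = (\<Sum>\<beta><W. \<Sum>\<alpha><W. if \<beta> = \<alpha> + nat (-d) then (1::real) else 0)"
    by (subst sum.swap, intro sum.cong refl) (use False in auto)
  also have "\<dots> = real W - real (nat (-d))" by (rule count_pairs_nat) (use assms False in auto)
  finally show ?thesis using False by simp
qed

lemma bt_blocks:
  assumes "m \<ge> 1" "\<rho> < m" "\<gamma> < m" "int \<alpha> - int \<beta> = int i - int j"
  shows "block_toeplitz m R (\<alpha>*m+\<rho>) (\<beta>*m+\<gamma>) = block_toeplitz m R (i*m+\<rho>) (j*m+\<gamma>)"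
proof -
  have "\<alpha> - \<beta> = i - j" "\<beta> - \<alpha> = j - i" "(\<beta> \<le> \<alpha>) = (j \<le> i)" using assms(4) by auto
  then show ?thesis using assms(1-3) unfolding block_toeplitz_def Let_def by simp
qed

lemma circW_corner:
  assumes m: "m \<ge> 1" and NW: "2 * W \<le> N" and i: "i < W" and j: "j < W" and r: "\<rho> < m" and c: "\<gamma> < m"
  shows "circW m N W (block_toeplitz m R) (i*m+\<rho>) (j*m+\<gamma>) =
     (real W - real_of_int \<bar>int i - int j\<bar>) / real W * block_toeplitz m R (i*m+\<rho>) (j*m+\<gamma>)"
proof -
  let ?V = "block_toeplitz m R (i*m+\<rho>) (j*m+\<gamma>)"
  have iN: "i < N" and jN: "j < N" using i j NW by auto
  have "(\<Sum>\<alpha><W. \<Sum>\<beta><W. if (int \<alpha> - int \<beta>) mod int N = (int i - int j) mod int N then block_toeplitz m R (\<alpha>*m+\<rho>) (\<beta>*m+\<gamma>) else 0)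
     = (\<Sum>\<alpha><W. \<Sum>\<beta><W. ?V * (if int \<alpha> - int \<beta> = int i - int j then 1 else 0))"
  proof (rule sum.cong[OF refl], rule sum.cong[OF refl])
    fix \<alpha> \<beta> assume a: "\<alpha> \<in> {..<W}" and b: "\<beta> \<in> {..<W}"
    have "\<bar>(int \<alpha> - int \<beta>) - (int i - int j)\<bar> < int N" using a b i j NW by auto
    then have e: "((int \<alpha> - int \<beta>) mod int N = (int i - int j) mod int N) = (int \<alpha> - int \<beta> = int i - int j)"
      by (rule mod_eq_small)
    show "(if (int \<alpha> - int \<beta>) mod int N = (int i - int j) mod int N then block_toeplitz m R (\<alpha>*m+\<rho>) (\<beta>*m+\<gamma>) else 0)
       = ?V * (if int \<alpha> - int \<beta> = int i - int j then 1 else 0)"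
    proof (cases "int \<alpha> - int \<beta> = int i - int j")
      case True
      then show ?thesis unfolding e using bt_blocks[OF m r c True] by simp
    next
      case False
      then show ?thesis unfolding e by simp
    qed
  qed
  also have "\<dots> = ?V * (real W - real_of_int \<bar>int i - int j\<bar>)"
    using count_pairs[of "int i - int j" W] i j by (simp add: sum_distrib_left[symmetric])
  finally show ?thesis unfolding circW_block[OF m iN jN r c] by simp
qed

lemma lim_g: "((\<lambda>W::nat. real W / (real W - real k)) \<longlongrightarrow> 1) sequentially"
proof -
  have "((\<lambda>W::nat. 1 / (1 - real k / real W)) \<longlongrightarrow> 1 / (1 - 0)) sequentially"
    by (intro tendsto_intros lim_const_over_n) simp
  moreover have "eventually (\<lambda>W. 1 / (1 - real k / real W) = real W / (real W - real k)) sequentially"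
    using eventually_gt_at_top[of k] by eventually_elim (simp add: field_simps)
  ultimately show ?thesis using Lim_transform_eventually by fastforce
qed

lemma sym_mat_eq: "sym_mat d A = symS {..<d} A" unfolding sym_mat_def symS_def by auto
lemma pos_def_eq: "pos_def_mat d A = pdS {..<d} A" unfolding pos_def_mat_def pdS_def formS_def by auto

definition bdist :: "nat \<Rightarrow> nat \<Rightarrow> nat" where "bdist i j = (if j \<le> i then i - j else j - i)"

lemma bt_amp: "block_toeplitz m (\<lambda>k r c. f k * Sig k r c) p q = f (bdist (p div m) (q div m)) * block_toeplitz m Sig p q"
  unfolding block_toeplitz_def Let_def bdist_def by simp

theorem theorem5:
  fixes m n :: nat and Sig :: "nat \<Rightarrow> nat \<Rightarrow> nat \<Rightarrow> real"
  assumes "m \<ge> 1" and "n \<ge> 1"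
    and "sym_mat (m * (n + 1)) (block_toeplitz m Sig)"
    and "pos_def_mat (m * (n + 1)) (block_toeplitz m Sig)"
  shows "\<exists>Nbar. \<forall>N \<ge> Nbar. \<exists>S :: nat \<Rightarrow> nat \<Rightarrow> real.
           block_circulant m N S \<and> sym_mat (m * N) S \<and> pos_def_mat (m * N) S \<and>
           (\<forall>p < m * (n + 1). \<forall>q < m * (n + 1). S p q = block_toeplitz m Sig p q)"
proof -
  have m: "m \<ge> 1" using assms(1) .
  let ?D = "{..<m * (n + 1)}"
  let ?T0 = "block_toeplitz m Sig"
  have s0: "symS ?D ?T0" using assms(3) sym_mat_eq by simp
  have p0: "pdS ?D ?T0" using assms(4) pos_def_eq by simp
  define g where "g W k = real W / (real W - real k)" for W k :: nat
  define Sig1 where "Sig1 W = (\<lambda>k r c. g W k * Sig k r c)" for W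
  have A: "block_toeplitz m (Sig1 W) p q = g W (bdist (p div m) (q div m)) * ?T0 p q" for W p q
    unfolding Sig1_def by (rule bt_amp)
  have symA: "\<forall>W. symS ?D (block_toeplitz m (Sig1 W))"
    using s0 unfolding symS_def A by (simp add: bdist_def)
  have limA: "\<forall>p q. ((\<lambda>W. block_toeplitz m (Sig1 W) p q) \<longlongrightarrow> ?T0 p q) sequentially"
  proof (intro allI)
    fix p q
    have "((\<lambda>W. g W (bdist (p div m) (q div m)) * ?T0 p q) \<longlongrightarrow> 1 * ?T0 p q) sequentially"
      unfolding g_def by (intro tendsto_intros lim_g)
    then show "((\<lambda>W. block_toeplitz m (Sig1 W) p q) \<longlongrightarrow> ?T0 p q) sequentially" unfolding A by simp
  qed
  have "eventually (\<lambda>W. pdS ?D (block_toeplitz m (Sig1 W))) sequentially"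
    by (rule pd_open[OF _ symA s0 limA p0]) simp
  then obtain W0 where W0: "\<And>W. W \<ge> W0 \<Longrightarrow> pdS ?D (block_toeplitz m (Sig1 W))"
    unfolding eventually_sequentially by blast
  define W where "W = max W0 (n + 1)"
  have nW: "n < W" and W1: "W \<ge> 1" unfolding W_def by auto
  have pW: "pdS ?D (block_toeplitz m (Sig1 W))" using W0 unfolding W_def by simp
  have sW: "symS ?D (block_toeplitz m (Sig1 W))" using symA by blast
  have WW: "n + 1 + (W - (n + 1)) = W" using nW by simp
  obtain R where R: "\<forall>k\<le>n. R k = Sig1 W k" "symS {..<m*W} (block_toeplitz m R)" "pdS {..<m*W} (block_toeplitz m R)"
    using toeplitz_ext_iter[OF m sW pW, of "W - (n+1)"] unfolding WW by blast
  show ?thesis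
  proof (intro exI allI impI)
    fix N assume NW: "2 * W \<le> N"
    have N1: "N \<ge> 1" using NW W1 by simp
    let ?S = "circW m N W (block_toeplitz m R)"
    have c1: "block_circulant m N ?S" by (rule circW_circulant[OF m])
    have c2: "sym_mat (m * N) ?S" unfolding sym_mat_eq symS_def using circW_sym[OF R(2)] by blast
    have c3: "pos_def_mat (m * N) ?S" unfolding pos_def_eq by (rule circW_pd[OF m N1 W1 R(3)])
    have c4: "?S p q = ?T0 p q" if p: "p < m * (n + 1)" and q: "q < m * (n + 1)" for p q
    proof -
      define i where "i = p div m"
      define j where "j = q div m"
      have "p div m < n + 1" using less_mult_imp_div_less[of p "n+1" m] p by (simp add: mult.commute)
      then have i: "i \<le> n" unfolding i_def by simp
      have "q div m < n + 1" using less_mult_imp_div_less[of q "n+1" m] q by (simp add: mult.commute)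
      then have j: "j \<le> n" unfolding j_def by simp
      have pe: "p = i * m + p mod m" and qe: "q = j * m + q mod m" unfolding i_def j_def by simp_all
      have r: "p mod m < m" and c: "q mod m < m" using m by simp_all
      have "?S p q = (real W - real_of_int \<bar>int i - int j\<bar>) / real W * block_toeplitz m R p q"
        using circW_corner[OF m NW _ _ r c, of i j R] i j nW pe qe by simp
      also have "block_toeplitz m R p q = block_toeplitz m (Sig1 W) p q"
        by (rule bt_agree[of n]) (use R(1) i j in \<open>auto simp: i_def j_def\<close>)
      also have "\<dots> = g W (bdist i j) * ?T0 p q" unfolding A i_def j_def ..
      also have "(real W - real_of_int \<bar>int i - int j\<bar>) / real W * (g W (bdist i j) * ?T0 p q) = ?T0 p q"
      proof -
        have b: "real_of_int \<bar>int i - int j\<bar> = real (bdist i j)" unfolding bdist_def by auto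
        have bn: "bdist i j < W" using i j nW unfolding bdist_def by auto
        show ?thesis unfolding b g_def using bn W1 by (simp add: field_simps)
      qed
      finally show ?thesis .
    qed
    show "block_circulant m N ?S \<and> sym_mat (m * N) ?S \<and> pos_def_mat (m * N) ?S \<and>
           (\<forall>p < m * (n + 1). \<forall>q < m * (n + 1). ?S p q = ?T0 p q)"
      using c1 c2 c3 c4 by blast
  qed
qed

end
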